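(* Let $n\ge3$ and let $A$ be a real symmetric diagonally dominant $n\times n$ matrix all of whose entries are positive. Let $m$ be the largest off-diagonal entry of $A$, $\ell$ the smallest entry of $A$, and $\delta=\max_i\Delta_i(A)$. Then the condition number $\kappa_\infty(A)=\|A\|_\infty\|A^{-1}\|_\infty$ satisfies $$\kappa_\infty(A)\le\frac{(2m(n-1)+\delta)(3n-4)}{2\ell(n-2)(n-1)}.$$
   Context: For a real $n\times n$ matrix $A$, $\Delta_i(A)=|A_{ii}|-\sum_{j\ne i}|A_{ij}|$; $A$ is diagonally dominant if $\Delta_i(A)\ge0$ for all $i$. $\|A\|_\infty$ is the maximum absolute row sum of $A$. *)

theory Defs
  imports "HOL-Analysis.Analysis"
begin

definition Delta :: "real^'n^'n \<Rightarrow> 'n \<Rightarrow> real" where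
  "Delta A i = \<bar>A $ i $ i\<bar> - (\<Sum>j\<in>UNIV - {i}. \<bar>A $ i $ j\<bar>)"

definition diag_dominant :: "real^'n^'n \<Rightarrow> bool" where
  "diag_dominant A \<longleftrightarrow> (\<forall>i. Delta A i \<ge> 0)"

definition inf_norm :: "real^'n^'n \<Rightarrow> real" where
  "inf_norm A = Max (range (\<lambda>i. \<Sum>j\<in>UNIV. \<bar>A $ i $ j\<bar>))"

definition cond_inf :: "real^'n^'n \<Rightarrow> real" where
  "cond_inf A = inf_norm A * inf_norm (matrix_inv A)"

end

theory Submission
  imports Defs
begin

definition lamPN :: "'a set \<Rightarrow> 'a set \<Rightarrow> 'a \<Rightarrow> real" where
  "lamPN P N i = (if i \<in> P then 1 else if i \<in> N then -1 else 0)"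

lemma sum_lamPN:
  fixes P N :: "'a::finite set"
  assumes "P \<inter> N = {}"
  shows "(\<Sum>i\<in>UNIV. lamPN P N i * f i) = sum f P - sum f N"
proof -
  have "(\<Sum>i\<in>UNIV. lamPN P N i * f i) = (\<Sum>i\<in>UNIV. (if i \<in> P then f i else 0) - (if i \<in> N then f i else 0))"
    using assms by (intro sum.cong) (auto simp: lamPN_def)
  also have "\<dots> = sum f P - sum f N"
    by (simp add: sum_subtractf flip: sum.inter_restrict)
  finally show ?thesis .
qed

lemma sum_abs_lamPN:
  fixes P N :: "'a::finite set"
  assumes "P \<inter> N = {}"
  shows "(\<Sum>i\<in>UNIV. \<bar>lamPN P N i\<bar>) = real (card P) + real (card N)"
proof -
  have "(\<Sum>i\<in>UNIV. \<bar>lamPN P N i\<bar>) = (\<Sum>i\<in>UNIV. (if i \<in> P then 1 else 0) + (if i \<in> N then 1 else 0))"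
    using assms by (intro sum.cong) (auto simp: lamPN_def)
  also have "\<dots> = real (card P) + real (card N)"
    by (simp add: sum.distrib flip: sum.inter_restrict)
  finally show ?thesis .
qed

lemma valid_pair: fixes a b t :: real assumes "0 < t"
  shows "0 \<le> ((if t \<le> \<bar>a\<bar> then (if 0 \<le> a then 1 else -1) else 0) + (if t \<le> \<bar>b\<bar> then (if 0 \<le> b then 1 else -1) else 0)) * (a + b)"
  using assms by (split if_split; split if_split; split if_split; split if_split) (auto simp: abs_if)

lemma core_bound:
  fixes u :: "'n::finite \<Rightarrow> real" and p :: 'n
  assumes n3: "CARD('n) \<ge> 3"
  and pmax: "\<And>i. \<bar>u i\<bar> \<le> u p"
  and hyp: "\<And>lam. (\<And>i. 0 \<le> lam i * u i) \<Longrightarrow> (\<And>i j. i \<noteq> j \<Longrightarrow> 0 \<le> (lam i + lam j) * (u i + u j))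
     \<Longrightarrow> (\<Sum>i\<in>UNIV. lam i * ((real CARD('n) - 2) * u i + sum u UNIV)) \<le> (\<Sum>i\<in>UNIV. \<bar>lam i\<bar>)"
  shows "(real CARD('n) - 2) * u p \<le> (3 * real CARD('n) - 4) / (2 * real CARD('n) - 2)"
proof -
  define m where "m = real CARD('n) - 2"
  define S where "S = sum u UNIV"
  have m1: "m \<ge> 1" using n3 unfolding m_def by simp
  have cn: "real CARD('n) = m + 2" by (simp add: m_def)
  have PN: "m * (sum u P - sum u N) + S * (real (card P) - real (card N)) \<le> real (card P) + real (card N)"
    if disj: "P \<inter> N = {}" and vP: "\<And>i. i \<in> P \<Longrightarrow> 0 \<le> u i" and vN: "\<And>i. i \<in> N \<Longrightarrow> u i \<le> 0"
      and v2: "\<And>i j. i \<noteq> j \<Longrightarrow> 0 \<le> (lamPN P N i + lamPN P N j) * (u i + u j)" for P N :: "'n set"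
  proof -
    have v1: "0 \<le> lamPN P N i * u i" for i
      using vP[of i] vN[of i] disj by (auto simp: lamPN_def)
    have "(\<Sum>i\<in>UNIV. lamPN P N i * ((real CARD('n) - 2) * u i + sum u UNIV)) \<le> (\<Sum>i\<in>UNIV. \<bar>lamPN P N i\<bar>)"
      by (rule hyp) (use v1 v2 in auto)
    also have "\<dots> = real (card P) + real (card N)" by (rule sum_abs_lamPN[OF disj])
    finally have *: "(\<Sum>i\<in>UNIV. lamPN P N i * (m * u i + S)) \<le> real (card P) + real (card N)"
      by (simp add: m_def S_def)
    have "(\<Sum>i\<in>UNIV. lamPN P N i * (m * u i + S)) = sum (\<lambda>i. m * u i + S) P - sum (\<lambda>i. m * u i + S) N"
      by (rule sum_lamPN[OF disj])
    also have "\<dots> = m * (sum u P - sum u N) + S * (real (card P) - real (card N))"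
      by (simp add: sum.distrib algebra_simps flip: sum_distrib_left)
    finally show ?thesis using * by simp
  qed
  have up0: "0 \<le> u p" using pmax[of p] by simp
  have I1: "m * u p + S \<le> 1"
  proof -
    have "0 \<le> (lamPN {p} {} i + lamPN {p} {} j) * (u i + u j)" if "i \<noteq> j" for i j
      using pmax[of i] pmax[of j] that by (auto simp: lamPN_def abs_le_iff)
    from PN[of "{p}" "{}", OF _ _ _ this] up0 show ?thesis by simp
  qed
  define Pos where "Pos = {i. 0 \<le> u i}"
  define Neg where "Neg = {i. u i < 0}"
  define X where "X = sum u Pos"
  define Yn where "Yn = sum u Neg"
  define a where "a = card Pos"
  define c where "c = card Neg"
  have disjPN: "Pos \<inter> Neg = {}" by (auto simp: Pos_def Neg_def)
  have unPN: "Pos \<union> Neg = UNIV" by (auto simp: Pos_def Neg_def)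
  have SXY: "S = X + Yn"
    unfolding S_def X_def Yn_def using disjPN unPN by (metis finite sum.union_disjoint)
  have acn: "real a + real c = m + 2"
    unfolding a_def c_def cn[symmetric] using disjPN unPN by (metis card_Un_disjoint finite of_nat_add)
  have pPos: "p \<in> Pos" using up0 by (simp add: Pos_def)
  have Xup: "u p \<le> X"
    unfolding X_def by (rule member_le_sum[OF pPos]) (auto simp: Pos_def)
  have I2: "m * (X - Yn) + S * (real a - real c) \<le> real a + real c"
  proof -
    have "0 \<le> (lamPN Pos Neg i + lamPN Pos Neg j) * (u i + u j)" if "i \<noteq> j" for i j
      by (auto simp: lamPN_def Pos_def Neg_def)
    from PN[OF disjPN _ _ this] show ?thesis
      by (auto simp: X_def Yn_def a_def c_def Pos_def Neg_def)
  qed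
  have goal_eq: "(3 * real CARD('n) - 4) / (2 * real CARD('n) - 2) = (3*m+2)/(2*m+2)"
    by (simp add: cn algebra_simps)
  have mpos: "0 < 2*m+2" using m1 by simp
  have "m * u p \<le> (3*m+2)/(2*m+2)"
  proof (cases "S \<ge> - m / (2*(m+1))")
    case True
    have "(3*m+2)/(2*m+2) = 1 + m/(2*(m+1))" using m1 by (simp add: field_simps)
    then show ?thesis using I1 True by linarith
  next
    case False
    define s where "s = - S"
    have "0 < m / (2*(m+1))" using m1 by simp
    hence s0: "s > 0" using False by (simp add: s_def)
    define \<tau> where "\<tau> = s / m"
    have tau0: "\<tau> > 0" using s0 m1 by (simp add: \<tau>_def)
    have mtau: "m * \<tau> = s" using m1 by (simp add: \<tau>_def)
    have I1': "m * u p - 1 \<le> s" using I1 by (simp add: s_def)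
    show ?thesis
    proof (cases "\<forall>i. i \<noteq> p \<longrightarrow> \<bar>u i\<bar> < \<tau>")
      case True
      have negp: "i \<noteq> p" if "i \<in> Neg" for i using pPos disjPN that by auto
      have Yeq: "-Yn = X + s" using SXY by (simp add: s_def)
      have Neg_ne: "Neg \<noteq> {}"
      proof
        assume "Neg = {}"
        then have "Yn = 0" by (simp add: Yn_def)
        then show False using Yeq Xup up0 s0 by linarith
      qed
      have "sum (\<lambda>i. - \<tau>) Neg < Yn"
        unfolding Yn_def
      proof (rule sum_strict_mono[OF finite Neg_ne])
        fix i assume iN: "i \<in> Neg"
        have "i \<noteq> p" using negp iN by blast
        have "u i < 0" using iN by (simp add: Neg_def)
        with True \<open>i \<noteq> p\<close> have "\<bar>u i\<bar> < \<tau>" by auto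
        thus "- \<tau> < u i" by linarith
      qed
      hence Ylt: "-Yn < real c * \<tau>" by (simp add: c_def)
      have "s < real c * \<tau>" using Ylt Yeq Xup up0 by linarith
      hence "m * s < m * (real c * \<tau>)" using m1 by simp
      also have "\<dots> = real c * s" using mtau by (simp add: algebra_simps)
      finally have "m * s < real c * s" .
      hence mc: "m < real c" using s0 by simp
      have "real a < 2" using mc acn by linarith
      hence "a < 2" by simp
      moreover have "card Pos > 0" using pPos by (auto simp: card_gt_0_iff)
      hence "a \<ge> 1" by (simp add: a_def)
      ultimately have a1: "a = 1" by simp
      hence aeq: "real a = 1" by simp
      have ceq: "real c = m + 1" using acn aeq by linarith
      have "card Pos = 1" using a1 by (simp add: a_def)
      hence Pos_eq: "Pos = {p}" using pPos by (metis card_1_singletonE singletonD)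
      have Xeq: "X = u p" by (simp add: X_def Pos_eq)
      have Yn': "Yn = - u p - s" using Yeq Xeq by linarith
      have e: "m * (X - Yn) + S * (real a - real c) = 2*(m*u p) + 2*(m * s)"
        unfolding Yn' Xeq aeq ceq s_def by (simp add: algebra_simps)
      have k1: "2*(m*u p) + 2*(m * s) \<le> m + 2" using I2 e acn by linarith
      have k2: "m * (m * u p - 1) \<le> m * s" using I1' m1 by (intro mult_left_mono) auto
      have k3: "m * (m * u p - 1) = m * (m * u p) - m" by (simp add: algebra_simps)
      have k4: "(m * u p) * (2*m+2) = 2*(m * (m * u p)) + 2*(m*u p)" by (simp add: algebra_simps)
      have "(m * u p) * (2*m+2) \<le> 3*m+2" using k1 k2 k3 k4 by linarith
      then show ?thesis using mpos by (simp add: pos_le_divide_eq)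
    next
      case False
      then obtain q where qp: "q \<noteq> p" and qt: "\<tau> \<le> \<bar>u q\<bar>" by auto
      define HP where "HP = {i. \<tau> \<le> \<bar>u i\<bar> \<and> 0 \<le> u i}"
      define HN where "HN = {i. \<tau> \<le> \<bar>u i\<bar> \<and> u i < 0}"
      define OP where "OP = {i. \<bar>u i\<bar> < \<tau> \<and> 0 \<le> u i}"
      define ON where "ON = {i. \<bar>u i\<bar> < \<tau> \<and> u i < 0}"
      define aH where "aH = real (card HP)"
      define cH where "cH = real (card HN)"
      define aO where "aO = real (card OP)"
      define cO where "cO = real (card ON)"
      define XH where "XH = sum u HP"
      define YH where "YH = sum u HN"
      define XO where "XO = sum u OP"
      define YO where "YO = sum u ON"
      have pHP: "p \<in> HP" using pmax[of q] qt up0 by (auto simp: HP_def)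
      have qH: "q \<in> HP \<union> HN" using qt by (auto simp: HP_def HN_def)
      have disjH: "HP \<inter> HN = {}" by (auto simp: HP_def HN_def)
      have h2: "aH + cH \<ge> 2"
      proof -
        have "{p, q} \<subseteq> HP \<union> HN" using pHP qH by auto
        hence "card {p,q} \<le> card (HP \<union> HN)" by (intro card_mono) auto
        moreover have "card {p,q} = 2" using qp by auto
        moreover have "card (HP \<union> HN) = card HP + card HN" using disjH by (intro card_Un_disjoint) auto
        ultimately show ?thesis by (simp add: aH_def cH_def)
      qed
      have I3: "m * (XH - YH) + S * (aH - cH) \<le> aH + cH"
      proof -
        have Lx: "lamPN HP HN k = (if \<tau> \<le> \<bar>u k\<bar> then (if 0 \<le> u k then 1 else -1) else 0)" for k
          by (simp add: lamPN_def HP_def HN_def)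
        have "0 \<le> (lamPN HP HN i + lamPN HP HN j) * (u i + u j)" if "i \<noteq> j" for i j
          unfolding Lx by (rule valid_pair[OF tau0])
        moreover have "\<And>i. i \<in> HP \<Longrightarrow> 0 \<le> u i" by (simp add: HP_def)
        moreover have "\<And>i. i \<in> HN \<Longrightarrow> u i \<le> 0" by (simp add: HN_def)
        ultimately have "m * (sum u HP - sum u HN) + S * (real (card HP) - real (card HN)) \<le> real (card HP) + real (card HN)"
          using PN[OF disjH] by blast
        thus ?thesis by (simp add: XH_def YH_def aH_def cH_def)
      qed
      have split: "sum f UNIV = sum f HP + sum f OP + sum f HN + sum f ON" for f :: "'n \<Rightarrow> real"
      proof -
        have "sum f UNIV = (\<Sum>i\<in>UNIV. (if i \<in> HP then f i else 0) + (if i \<in> OP then f i else 0) + (if i \<in> HN then f i else 0) + (if i \<in> ON then f i else 0))"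
        proof (rule sum.cong[OF refl])
          fix i
          show "f i = (if i \<in> HP then f i else 0) + (if i \<in> OP then f i else 0) + (if i \<in> HN then f i else 0) + (if i \<in> ON then f i else 0)"
            by (cases "\<tau> \<le> \<bar>u i\<bar>"; cases "0 \<le> u i") (simp_all add: HP_def OP_def HN_def ON_def not_le)
        qed
        also have "\<dots> = sum f HP + sum f OP + sum f HN + sum f ON"
          by (simp add: sum.distrib flip: sum.inter_restrict)
        finally show ?thesis .
      qed
      have Ssplit: "S = XH + XO + YH + YO" using split[of u] by (simp add: S_def XH_def XO_def YH_def YO_def)
      have nsplit: "m + 2 = aH + aO + cH + cO" using split[of "\<lambda>_. 1"] cn by (simp add: aH_def aO_def cH_def cO_def)
      have XO0: "0 \<le> XO" unfolding XO_def by (rule sum_nonneg) (auto simp: OP_def)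
      have YO: "- (cO * \<tau>) \<le> YO"
      proof -
        have "sum (\<lambda>i. - \<tau>) ON \<le> sum u ON" by (rule sum_mono) (auto simp: ON_def)
        thus ?thesis by (simp add: cO_def YO_def)
      qed
      have XHb: "u p + (aH - 1) * \<tau> \<le> XH"
      proof -
        have "sum u HP = u p + sum u (HP - {p})" using pHP by (simp add: sum.remove)
        moreover have "real (card (HP - {p})) * \<tau> \<le> sum u (HP - {p})"
        proof -
          have "sum (\<lambda>i. \<tau>) (HP - {p}) \<le> sum u (HP - {p})" by (rule sum_mono) (auto simp: HP_def)
          thus ?thesis by simp
        qed
        moreover have "card HP \<ge> 1" using pHP by (auto simp: card_gt_0_iff Suc_le_eq)
        moreover have "real (card (HP - {p})) = aH - 1" using pHP calculation(3) by (simp add: aH_def card_Diff_singleton of_nat_diff)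
        ultimately show ?thesis by (simp add: XH_def)
      qed
      have A1: "- (s * cO) \<le> m * YO"
      proof -
        have "m * (- (cO * \<tau>)) \<le> m * YO" using YO m1 by (intro mult_left_mono) auto
        moreover have "m * (- (cO * \<tau>)) = - (cO * (m * \<tau>))" by (simp add: algebra_simps)
        ultimately have "- (cO * (m * \<tau>)) \<le> m * YO" by linarith
        hence "- (cO * s) \<le> m * YO" unfolding mtau .
        thus ?thesis by (simp only: mult.commute[of s cO])
      qed
      have A2: "m * u p + s * aH - s \<le> m * XH"
      proof -
        have "m * (u p + (aH - 1) * \<tau>) \<le> m * XH" using XHb m1 by (intro mult_left_mono) auto
        moreover have "m * (u p + (aH - 1) * \<tau>) = m * u p + aH * (m * \<tau>) - m * \<tau>" by (simp add: algebra_simps)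
        ultimately have "m * u p + aH * (m * \<tau>) - m * \<tau> \<le> m * XH" by linarith
        hence "m * u p + aH * s - s \<le> m * XH" unfolding mtau .
        thus ?thesis by (simp only: mult.commute[of s aH])
      qed
      have A3: "0 \<le> m * XO" using XO0 m1 by simp
      have I3': "m * XH - m * YH - s * aH + s * cH \<le> aH + cH" using I3 by (simp add: s_def algebra_simps)
      have e1: "m * YH = - (s * m) - m * XH - m * XO - m * YO" using Ssplit by (simp add: s_def algebra_simps)
      have meq: "m = aH + aO + cH + cO - 2" using nsplit by linarith
      have e2: "s * m = s * aH + s * aO + s * cH + s * cO - 2 * s" unfolding meq by (simp add: algebra_simps)
      define K where "K = 2*aH + 2*cH + aO - 4"
      have K0: "K \<ge> 0" using h2 by (simp add: K_def aO_def)
      have e3: "s * K = 2 * (s * aH) + 2 * (s * cH) + s * aO - 4 * s" by (simp add: K_def algebra_simps)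
      have T1: "2 * (m * u p) + s * K \<le> aH + cH"
        using I3' e1 e2 e3 A1 A2 A3 by linarith
      have T2: "(m * u p - 1) * K \<le> s * K" using I1' K0 by (rule mult_right_mono)
      have e4: "(m * u p - 1) * K = (m * u p) * K - K" by (simp add: algebra_simps)
      have T3: "(m * u p) * (K + 2) \<le> aH + cH + K" using T1 T2 e4 by (simp add: algebra_simps)
      have e5: "(3*m+2)*(K+2) - (aH + cH + K)*(2*m+2) = aO * m + 2 * (aO + cO)"
        unfolding K_def meq by algebra
      have aO0: "aO \<ge> 0" "cO \<ge> 0" by (simp_all add: aO_def cO_def)
      have T5: "(aH + cH + K)*(2*m+2) \<le> (3*m+2)*(K+2)" using e5 aO0 m1 by (smt (verit) mult_nonneg_nonneg)
      have "((m * u p) * (2*m+2)) * (K + 2) = ((m * u p) * (K + 2)) * (2*m+2)" by (simp add: algebra_simps)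
      also have "\<dots> \<le> (aH + cH + K) * (2*m+2)" using T3 mpos by (intro mult_right_mono) auto
      also have "\<dots> \<le> (3*m+2)*(K+2)" by (rule T5)
      finally have "((m * u p) * (2*m+2)) * (K + 2) \<le> (3*m+2)*(K+2)" .
      hence "(m * u p) * (2*m+2) \<le> 3*m+2" using K0 by simp
      then show ?thesis using mpos by (simp add: pos_le_divide_eq)
    qed
  qed
  then show ?thesis unfolding goal_eq m_def .
qed

lemma key_ineq:
  fixes A :: "real^'n^'n" and x :: "real^'n" and lam :: "'n \<Rightarrow> real"
  assumes sym: "\<And>i j. A$i$j = A$j$i"
  and dd: "\<And>i. 0 \<le> Delta A i"
  and pos: "\<And>i j. 0 < A$i$j"
  and Lle: "\<And>i j. L \<le> A$i$j"
  and v1: "\<And>i. 0 \<le> lam i * x$i"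
  and v2: "\<And>i j. i \<noteq> j \<Longrightarrow> 0 \<le> (lam i + lam j) * (x$i + x$j)"
  shows "L * (\<Sum>i\<in>UNIV. lam i * ((real CARD('n) - 2) * x$i + (\<Sum>j\<in>UNIV. x$j))) \<le> (\<Sum>i\<in>UNIV. lam i * (A *v x)$i)"
proof -
  define S where "S = (\<Sum>j\<in>UNIV. x$j)"
  define n where "n = real CARD('n)"
  have Del: "Delta A i = 2 * A$i$i - (\<Sum>j\<in>UNIV. A$i$j)" for i
  proof -
    have "(\<Sum>j\<in>UNIV - {i}. \<bar>A$i$j\<bar>) = (\<Sum>j\<in>UNIV - {i}. A$i$j)"
      using pos by (intro sum.cong) (auto simp: abs_of_pos)
    also have "\<dots> = (\<Sum>j\<in>UNIV. A$i$j) - A$i$i" by (simp add: sum_diff1)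
    finally show ?thesis unfolding Delta_def using pos[of i i] by simp
  qed
  have Ax: "(A *v x)$i = (\<Sum>j\<in>UNIV. A$i$j * x$j)" for i
    by (simp add: matrix_vector_mult_def)
  have row: "(A *v x)$i = Delta A i * x$i + (\<Sum>j\<in>UNIV. A$i$j * (x$i + x$j)) - 2 * A$i$i * x$i" for i
  proof -
    have e1: "(\<Sum>j\<in>UNIV. A$i$j * (x$i + x$j)) = (\<Sum>j\<in>UNIV. A$i$j) * x$i + (\<Sum>j\<in>UNIV. A$i$j * x$j)"
      by (simp add: distrib_left sum.distrib sum_distrib_right)
    show ?thesis unfolding e1 Ax Del by (simp add: algebra_simps)
  qed
  define G where "G = (\<Sum>i\<in>UNIV. \<Sum>j\<in>UNIV. (A$i$j - L) * lam i * (x$i + x$j))"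
  have Gswap: "G = (\<Sum>i\<in>UNIV. \<Sum>j\<in>UNIV. (A$i$j - L) * lam j * (x$i + x$j))"
  proof -
    have "G = (\<Sum>j\<in>UNIV. \<Sum>i\<in>UNIV. (A$i$j - L) * lam i * (x$i + x$j))"
      unfolding G_def by (rule sum.swap)
    also have "\<dots> = (\<Sum>i\<in>UNIV. \<Sum>j\<in>UNIV. (A$i$j - L) * lam j * (x$i + x$j))"
      by (intro sum.cong refl) (simp add: sym add.commute)
    finally show ?thesis .
  qed
  have H: "4 * (\<Sum>i\<in>UNIV. (A$i$i - L) * (lam i * x$i)) \<le> (\<Sum>i\<in>UNIV. \<Sum>j\<in>UNIV. (A$i$j - L) * (lam i + lam j) * (x$i + x$j))"
  proof -
    have "0 \<le> (\<Sum>i\<in>UNIV. \<Sum>j\<in>UNIV. (A$i$j - L) * (lam i + lam j) * (x$i + x$j) - (if j = i then 4 * ((A$i$i - L) * (lam i * x$i)) else 0))"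
    proof (intro sum_nonneg)
      fix i j
      show "0 \<le> (A$i$j - L) * (lam i + lam j) * (x$i + x$j) - (if j = i then 4 * ((A$i$i - L) * (lam i * x$i)) else 0)"
      proof (cases "j = i")
        case True
        then show ?thesis by (simp add: algebra_simps)
      next
        case False
        have "0 \<le> (A$i$j - L) * ((lam i + lam j) * (x$i + x$j))"
        proof (rule mult_nonneg_nonneg)
          show "0 \<le> A$i$j - L" using Lle[of i j] by simp
          show "0 \<le> (lam i + lam j) * (x$i + x$j)" using v2[of i j] False by auto
        qed
        then show ?thesis using False by (simp add: mult.assoc)
      qed
    qed
    also have "\<dots> = (\<Sum>i\<in>UNIV. \<Sum>j\<in>UNIV. (A$i$j - L) * (lam i + lam j) * (x$i + x$j)) - 4 * (\<Sum>i\<in>UNIV. (A$i$i - L) * (lam i * x$i))"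
      by (simp add: sum_subtractf sum_distrib_left)
    finally show ?thesis by simp
  qed
  have twoG: "2 * G = (\<Sum>i\<in>UNIV. \<Sum>j\<in>UNIV. (A$i$j - L) * (lam i + lam j) * (x$i + x$j))"
  proof -
    have "2 * G = G + (\<Sum>i\<in>UNIV. \<Sum>j\<in>UNIV. (A$i$j - L) * lam j * (x$i + x$j))" using Gswap by simp
    also have "\<dots> = (\<Sum>i\<in>UNIV. \<Sum>j\<in>UNIV. (A$i$j - L) * (lam i + lam j) * (x$i + x$j))"
      unfolding G_def by (simp add: sum.distrib[symmetric] algebra_simps)
    finally show ?thesis .
  qed
  have sumL: "(\<Sum>i\<in>UNIV. \<Sum>j\<in>UNIV. L * lam i * (x$i + x$j)) = L * (\<Sum>i\<in>UNIV. lam i * (n * x$i + S))"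
    by (simp add: n_def S_def sum.distrib sum_distrib_left algebra_simps)
  have main: "(\<Sum>i\<in>UNIV. lam i * (A *v x)$i)
      = (\<Sum>i\<in>UNIV. Delta A i * (lam i * x$i)) + L * (\<Sum>i\<in>UNIV. lam i * (n * x$i + S)) + G
        - 2 * (\<Sum>i\<in>UNIV. A$i$i * (lam i * x$i))"
  proof -
    have "(\<Sum>i\<in>UNIV. lam i * (A *v x)$i) = (\<Sum>i\<in>UNIV. Delta A i * (lam i * x$i) + (\<Sum>j\<in>UNIV. L * lam i * (x$i + x$j)) + (\<Sum>j\<in>UNIV. (A$i$j - L) * lam i * (x$i + x$j)) - 2 * (A$i$i * (lam i * x$i)))"
    proof (rule sum.cong[OF refl])
      fix i
      have "(\<Sum>j\<in>UNIV. L * lam i * (x$i + x$j)) + (\<Sum>j\<in>UNIV. (A$i$j - L) * lam i * (x$i + x$j)) = (\<Sum>j\<in>UNIV. L * lam i * (x$i + x$j) + (A$i$j - L) * lam i * (x$i + x$j))"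
        by (rule sum.distrib[symmetric])
      also have "\<dots> = (\<Sum>j\<in>UNIV. A$i$j * (x$i + x$j) * lam i)"
        by (intro sum.cong refl) (simp add: algebra_simps)
      also have "\<dots> = (\<Sum>j\<in>UNIV. A$i$j * (x$i + x$j)) * lam i"
        by (rule sum_distrib_right[symmetric])
      finally have "(\<Sum>j\<in>UNIV. A$i$j * (x$i + x$j)) * lam i = (\<Sum>j\<in>UNIV. L * lam i * (x$i + x$j)) + (\<Sum>j\<in>UNIV. (A$i$j - L) * lam i * (x$i + x$j))" by simp
      then show "lam i * (A *v x)$i = Delta A i * (lam i * x$i) + (\<Sum>j\<in>UNIV. L * lam i * (x$i + x$j)) + (\<Sum>j\<in>UNIV. (A$i$j - L) * lam i * (x$i + x$j)) - 2 * (A$i$i * (lam i * x$i))"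
        unfolding row by (simp add: algebra_simps)
    qed
    also have "\<dots> = (\<Sum>i\<in>UNIV. Delta A i * (lam i * x$i)) + L * (\<Sum>i\<in>UNIV. lam i * (n * x$i + S)) + G
        - 2 * (\<Sum>i\<in>UNIV. A$i$i * (lam i * x$i))"
      unfolding G_def sumL[symmetric] by (simp add: sum.distrib sum_subtractf sum_distrib_left)
    finally show ?thesis .
  qed
  have D0: "0 \<le> (\<Sum>i\<in>UNIV. Delta A i * (lam i * x$i))"
    by (rule sum_nonneg) (rule mult_nonneg_nonneg[OF dd v1])
  have GL: "2 * (\<Sum>i\<in>UNIV. (A$i$i - L) * (lam i * x$i)) \<le> G" using H twoG by linarith
  have "2 * (\<Sum>i\<in>UNIV. (A$i$i - L) * (lam i * x$i)) = 2 * (\<Sum>i\<in>UNIV. A$i$i * (lam i * x$i)) - 2 * L * (\<Sum>i\<in>UNIV. lam i * x$i)"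
    by (simp add: algebra_simps sum_subtractf sum_distrib_left)
  moreover have "L * (\<Sum>i\<in>UNIV. lam i * ((n - 2) * x$i + S)) = L * (\<Sum>i\<in>UNIV. lam i * (n * x$i + S)) - 2 * L * (\<Sum>i\<in>UNIV. lam i * x$i)"
    by (simp add: algebra_simps sum_subtractf sum.distrib sum_distrib_left)
  ultimately show ?thesis using main D0 GL unfolding n_def S_def by linarith
qed

lemma vec_bound:
  fixes A :: "real^'n^'n" and L :: real and x :: "real^'n"
  assumes n3: "CARD('n) \<ge> 3"
  and sym: "\<And>i j. A$i$j = A$j$i"
  and dd: "\<And>i. 0 \<le> Delta A i"
  and pos: "\<And>i j. 0 < A$i$j"
  and Lle: "\<And>i j. L \<le> A$i$j"
  and L0: "0 < L"
  and bx: "\<And>i. \<bar>(A *v x)$i\<bar> \<le> 1"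
  shows "\<bar>x$k\<bar> \<le> (3 * real CARD('n) - 4) / (2 * L * (real CARD('n) - 2) * (real CARD('n) - 1))"
proof -
  obtain p where p: "\<And>i. \<bar>x$i\<bar> \<le> \<bar>x$p\<bar>"
  proof -
    have "finite (range (\<lambda>i. \<bar>x$i\<bar>))" by simp
    moreover have "range (\<lambda>i. \<bar>x$i\<bar>) \<noteq> {}" by simp
    ultimately have "Max (range (\<lambda>i. \<bar>x$i\<bar>)) \<in> range (\<lambda>i. \<bar>x$i\<bar>)" by (rule Max_in)
    then obtain p where pm0: "Max (range (\<lambda>i. \<bar>x$i\<bar>)) = \<bar>x$p\<bar>" by blast
    hence pm: "\<bar>x$p\<bar> = Max (range (\<lambda>i. \<bar>x$i\<bar>))" by simp
    have "\<bar>x$i\<bar> \<le> \<bar>x$p\<bar>" for i unfolding pm by (rule Max_ge) auto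
    then show ?thesis using that by blast
  qed
  define c :: real where "c = (if 0 \<le> x$p then 1 else -1)"
  define y where "y = (\<chi> i. c * x$i)"
  have yi: "y$i = c * x$i" for i by (simp add: y_def)
  have c1: "\<bar>c\<bar> = 1" by (simp add: c_def)
  have Ay: "(A *v y)$i = c * (A *v x)$i" for i
    by (simp add: y_def matrix_vector_mult_def sum_distrib_left algebra_simps)
  have bay: "\<bar>(A *v y)$i\<bar> \<le> 1" for i using bx[of i] c1 by (simp add: Ay abs_mult)
  have absy: "\<bar>y$i\<bar> = \<bar>x$i\<bar>" for i using c1 by (simp add: yi abs_mult)
  have yp: "y$p = \<bar>x$p\<bar>" by (simp add: yi c_def)
  define u where "u = (\<lambda>i. L * y$i)"
  have pmax: "\<bar>u i\<bar> \<le> u p" for i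
    using p[of i] L0 by (simp add: u_def abs_mult absy yp)
  have hyp: "(\<Sum>i\<in>UNIV. lam i * ((real CARD('n) - 2) * u i + sum u UNIV)) \<le> (\<Sum>i\<in>UNIV. \<bar>lam i\<bar>)"
    if v1: "\<And>i. 0 \<le> lam i * u i" and v2: "\<And>i j. i \<noteq> j \<Longrightarrow> 0 \<le> (lam i + lam j) * (u i + u j)" for lam
  proof -
    have w1: "0 \<le> lam i * y$i" for i
    proof -
      have "0 \<le> L * (lam i * y$i)" using v1[of i] by (simp add: u_def algebra_simps)
      thus ?thesis using L0 by (simp add: zero_le_mult_iff)
    qed
    have w2: "0 \<le> (lam i + lam j) * (y$i + y$j)" if "i \<noteq> j" for i j
    proof -
      have "0 \<le> L * ((lam i + lam j) * (y$i + y$j))" using v2[OF that] by (simp add: u_def algebra_simps)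
      thus ?thesis using L0 by (simp add: zero_le_mult_iff)
    qed
    have eq: "(\<Sum>i\<in>UNIV. lam i * ((real CARD('n) - 2) * u i + sum u UNIV)) = L * (\<Sum>i\<in>UNIV. lam i * ((real CARD('n) - 2) * y$i + (\<Sum>j\<in>UNIV. y$j)))"
      by (simp add: u_def sum_distrib_left algebra_simps)
    have "L * (\<Sum>i\<in>UNIV. lam i * ((real CARD('n) - 2) * y$i + (\<Sum>j\<in>UNIV. y$j))) \<le> (\<Sum>i\<in>UNIV. lam i * (A *v y)$i)"
      by (rule key_ineq[OF sym dd pos Lle w1 w2])
    also have "\<dots> \<le> (\<Sum>i\<in>UNIV. \<bar>lam i\<bar>)"
    proof (rule sum_mono)
      fix i
      have "lam i * (A *v y)$i \<le> \<bar>lam i\<bar> * \<bar>(A *v y)$i\<bar>" by (metis abs_ge_self abs_mult)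
      also have "\<dots> \<le> \<bar>lam i\<bar>" using bay[of i] by (simp add: mult_left_le)
      finally show "lam i * (A *v y)$i \<le> \<bar>lam i\<bar>" .
    qed
    finally show ?thesis unfolding eq .
  qed
  have cb: "(real CARD('n) - 2) * u p \<le> (3 * real CARD('n) - 4) / (2 * real CARD('n) - 2)"
    by (rule core_bound[OF n3 pmax hyp])
  have N2: "real CARD('n) - 2 > 0" "2 * real CARD('n) - 2 > 0" using n3 by auto
  have "((real CARD('n) - 2) * u p) * (2 * real CARD('n) - 2) \<le> 3 * real CARD('n) - 4"
    using cb N2 by (simp add: pos_le_divide_eq)
  moreover have "((real CARD('n) - 2) * u p) * (2 * real CARD('n) - 2) = \<bar>x$p\<bar> * (2 * L * (real CARD('n) - 2) * (real CARD('n) - 1))"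
    by (simp add: u_def yp algebra_simps)
  ultimately have "\<bar>x$p\<bar> * (2 * L * (real CARD('n) - 2) * (real CARD('n) - 1)) \<le> 3 * real CARD('n) - 4" by simp
  moreover have "0 < 2 * L * (real CARD('n) - 2) * (real CARD('n) - 1)" using N2 L0 by simp
  ultimately have "\<bar>x$p\<bar> \<le> (3 * real CARD('n) - 4) / (2 * L * (real CARD('n) - 2) * (real CARD('n) - 1))"
    by (simp add: pos_le_divide_eq)
  then show ?thesis using p[of k] by linarith
qed

theorem mainTheorem5:
  fixes A :: "real^'n^'n"
  assumes "CARD('n) \<ge> 3"
    and "transpose A = A"
    and "diag_dominant A"
    and "\<forall>i j. A $ i $ j > 0"
  defines "m \<equiv> Max {A $ i $ j | i j. i \<noteq> j}"
    and "l \<equiv> Min {A $ i $ j | i j. True}"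
    and "\<delta> \<equiv> Max (range (Delta A))"
    and "n \<equiv> real CARD('n)"
  shows "invertible A \<and>
    cond_inf A \<le> (2 * m * (n - 1) + \<delta>) * (3 * n - 4) / (2 * l * (n - 2) * (n - 1))"
proof -
  have n3: "CARD('n) \<ge> 3" by (rule assms(1))
  have sym: "A$i$j = A$j$i" for i j
  proof -
    have "(transpose A)$i$j = A$j$i" by (simp add: transpose_def)
    thus ?thesis using assms(2) by simp
  qed
  have dd: "0 \<le> Delta A i" for i using assms(3) by (simp add: diag_dominant_def)
  have pos: "0 < A$i$j" for i j using assms(4) by simp
  have allset: "{A $ i $ j | i j. True} = (\<lambda>(i,j). A$i$j) ` UNIV" by auto
  have finall: "finite {A $ i $ j | i j. True}" unfolding allset by simp
  have neall: "{A $ i $ j | i j. True} \<noteq> {}" by auto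
  have lle: "l \<le> A$i$j" for i j unfolding l_def by (rule Min_le[OF finall]) auto
  have l0: "0 < l"
  proof -
    have "l \<in> {A $ i $ j | i j. True}" unfolding l_def by (rule Min_in[OF finall neall])
    then obtain i j where "l = A$i$j" by auto
    thus ?thesis using pos by simp
  qed
  define B where "B = (3 * n - 4) / (2 * l * (n - 2) * (n - 1))"
  have vb: "\<bar>x$k\<bar> \<le> B" if "\<And>i. \<bar>(A *v x)$i\<bar> \<le> 1" for x k
    unfolding B_def n_def by (rule vec_bound[OF n3 sym dd pos lle l0 that])
  have ker: "x = 0" if Ax0: "A *v x = 0" for x
  proof -
    have "x$k = 0" for k
    proof (rule ccontr)
      assume xk: "x$k \<noteq> 0"
      define t where "t = (\<bar>B\<bar> + 1) / \<bar>x$k\<bar>"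
      define y where "y = (\<chi> i. t * x$i)"
      have "(A *v y)$i = t * (A *v x)$i" for i
        by (simp add: y_def matrix_vector_mult_def sum_distrib_left algebra_simps)
      hence "\<bar>(A *v y)$i\<bar> \<le> 1" for i using Ax0 by simp
      hence "\<bar>y$k\<bar> \<le> B" by (rule vb)
      moreover have "\<bar>y$k\<bar> = \<bar>B\<bar> + 1" using xk by (simp add: y_def t_def abs_mult)
      ultimately show False by linarith
    qed
    thus ?thesis by (simp add: vec_eq_iff)
  qed
  have inv: "invertible A"
    unfolding invertible_left_inverse matrix_left_invertible_ker using ker by blast
  have AB: "A ** matrix_inv A = mat 1"
  proof -
    have "\<exists>A'. A ** A' = mat 1 \<and> A' ** A = mat 1" using inv by (simp add: invertible_def)
    hence "A ** matrix_inv A = mat 1 \<and> matrix_inv A ** A = mat 1"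
      unfolding matrix_inv_def by (rule someI_ex)
    thus ?thesis by simp
  qed
  define Bi where "Bi = matrix_inv A"
  have rowinv: "(\<Sum>j\<in>UNIV. \<bar>Bi$i$j\<bar>) \<le> B" for i
  proof -
    define b where "b = (\<chi> j. if 0 \<le> Bi$i$j then 1 else (-1::real))"
    define z where "z = Bi *v b"
    have Az: "A *v z = b" unfolding z_def Bi_def by (simp add: matrix_vector_mul_assoc AB)
    have "\<bar>(A *v z)$j\<bar> \<le> 1" for j by (simp add: Az b_def)
    hence "\<bar>z$i\<bar> \<le> B" by (rule vb)
    moreover have "z$i = (\<Sum>j\<in>UNIV. \<bar>Bi$i$j\<bar>)"
      unfolding z_def matrix_vector_mult_def b_def by (intro trans[OF vec_lambda_beta] sum.cong) auto
    ultimately show ?thesis by simp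
  qed
  have normBi: "inf_norm Bi \<le> B"
    unfolding inf_norm_def using rowinv by (simp add: Max_le_iff)
  have normBi0: "0 \<le> inf_norm Bi"
  proof -
    have "(\<Sum>j\<in>UNIV. \<bar>Bi$i$j\<bar>) \<le> inf_norm Bi" for i unfolding inf_norm_def by (rule Max_ge) auto
    moreover have "0 \<le> (\<Sum>j\<in>UNIV. \<bar>Bi$i$j\<bar>)" for i by (simp add: sum_nonneg)
    ultimately show ?thesis by (meson order_trans)
  qed
  obtain i0 j0 :: 'n where ij0: "i0 \<noteq> j0"
  proof -
    have "\<exists>i j::'n. i \<noteq> j"
    proof (rule ccontr)
      assume "\<not> (\<exists>i j::'n. i \<noteq> j)"
      hence "UNIV = {undefined::'n}" by auto
      hence "CARD('n) = 1" by (auto simp: card_1_singleton_iff)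
      thus False using n3 by simp
    qed
    thus ?thesis using that by blast
  qed
  have finoff: "finite {A $ i $ j | i j. i \<noteq> j}"
    by (rule finite_subset[OF _ finall]) auto
  have offle: "A$i$j \<le> m" if "i \<noteq> j" for i j
    unfolding m_def by (rule Max_ge[OF finoff]) (use that in auto)
  have delle: "Delta A i \<le> \<delta>" for i unfolding \<delta>_def by (rule Max_ge) auto
  have rowA: "(\<Sum>j\<in>UNIV. \<bar>A$i$j\<bar>) \<le> 2 * m * (n - 1) + \<delta>" for i
  proof -
    have s1: "(\<Sum>j\<in>UNIV. \<bar>A$i$j\<bar>) = (\<Sum>j\<in>UNIV. A$i$j)" using pos by (intro sum.cong) (auto simp: abs_of_pos)
    have s2: "(\<Sum>j\<in>UNIV - {i}. \<bar>A$i$j\<bar>) = (\<Sum>j\<in>UNIV - {i}. A$i$j)" using pos by (intro sum.cong) (auto simp: abs_of_pos)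
    have s3: "(\<Sum>j\<in>UNIV. A$i$j) = A$i$i + (\<Sum>j\<in>UNIV - {i}. A$i$j)" by (simp add: sum.remove)
    have s4: "Delta A i = A$i$i - (\<Sum>j\<in>UNIV - {i}. A$i$j)" unfolding Delta_def s2 using pos[of i i] by simp
    have s5: "(\<Sum>j\<in>UNIV - {i}. A$i$j) \<le> real (card (UNIV - {i} :: 'n set)) * m"
      by (rule sum_bounded_above) (use offle in auto)
    have s6: "real (card (UNIV - {i} :: 'n set)) = n - 1" using n3 by (simp add: n_def card_Diff_singleton of_nat_diff)
    have "(\<Sum>j\<in>UNIV. \<bar>A$i$j\<bar>) = Delta A i + 2 * (\<Sum>j\<in>UNIV - {i}. A$i$j)" using s1 s3 s4 by simp
    also have "\<dots> \<le> \<delta> + 2 * ((n - 1) * m)" using delle[of i] s5 s6 by simp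
    finally show ?thesis by (simp add: algebra_simps)
  qed
  have normA: "inf_norm A \<le> 2 * m * (n - 1) + \<delta>"
    unfolding inf_norm_def using rowA by (simp add: Max_le_iff)
  have Xpos: "0 \<le> 2 * m * (n - 1) + \<delta>"
  proof -
    have "0 \<le> (\<Sum>j\<in>UNIV. \<bar>A$i0$j\<bar>)" by (simp add: sum_nonneg)
    thus ?thesis using rowA[of i0] by linarith
  qed
  have "cond_inf A = inf_norm A * inf_norm Bi" by (simp add: cond_inf_def Bi_def)
  also have "\<dots> \<le> (2 * m * (n - 1) + \<delta>) * B"
    by (rule mult_mono[OF normA normBi Xpos normBi0])
  also have "\<dots> = (2 * m * (n - 1) + \<delta>) * (3 * n - 4) / (2 * l * (n - 2) * (n - 1))"
    by (simp add: B_def)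
  finally show ?thesis using inv by simp
qed

end
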